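(* Let $H=\ell^2$ with standard unit vectors $e_k$, and define $f:H\to\mathbb{R}\cup\{+\infty\}$ by $f(\frac1ke_k)=\frac{1}{k^3}$ for $k=1,2,\dots$, $f(0)=0$, and $f(x)=+\infty$ otherwise. Then $f$ is proper and lower semicontinuous, $\bar x=0$ is a global minimizer of $f$ with $0\in\partial_pf(0)$, and $f''_-(0,0,h)=+\infty$ for every $h\in S_H$; nevertheless $0$ is not a strict local minimizer of order two for $f$.
   Context: $S_H$ is the unit sphere of $H$; $B(x,\delta)$ the open ball. $\bar x$ is a strict local minimizer of order two for $f$ if there exist $\beta,\delta>0$ with $f(x)\ge f(\bar x)+\frac{\beta}{2}\|x-\bar x\|^2$ for all $x\in B(\bar x,\delta)$. Proximal subdifferential: $\zeta\in\partial_p f(x)$ iff there exist $\sigma,\delta>0$ with $f(y)\ge f(x)+\langle\zeta,y-x\rangle-\frac{\sigma}{2}\|y-x\|^2$ whenever $\|y-x\|<\delta$. $f''_-(\bar x,p,h):=\liminf_{h'\to h,\,t\downarrow0}\frac{f(\bar x+th')-f(\bar x)-t\langle p,h'\rangle}{\frac12t^2}$. *)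

theory Defs
  imports "HOL-Analysis.Analysis"
begin

text \<open>Sequences are functions nat to real; the coordinate 0 is forced to be 0,
so the type is exactly the space of square-summable sequences (x_1, x_2, ...).\<close>

typedef l2 = "{x :: nat \<Rightarrow> real. x 0 = 0 \<and> summable (\<lambda>n. (x n)\<^sup>2)}"
  by (rule exI[of _ "\<lambda>_. 0"]) simp

setup_lifting type_definition_l2

lemma l2_sq_add:
  fixes x y :: "nat \<Rightarrow> real"
  assumes "summable (\<lambda>n. (x n)\<^sup>2)" "summable (\<lambda>n. (y n)\<^sup>2)"
  shows "summable (\<lambda>n. (x n + y n)\<^sup>2)"
proof (rule summable_comparison_test[OF _ summable_add[OF summable_mult[OF assms(1), of 2] summable_mult[OF assms(2), of 2]]])
  show "\<exists>N. \<forall>n\<ge>N. norm ((x n + y n)\<^sup>2) \<le> 2 * (x n)\<^sup>2 + 2 * (y n)\<^sup>2"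
  proof (intro exI allI impI)
    fix n
    have "0 \<le> (x n - y n)\<^sup>2" by simp
    then show "norm ((x n + y n)\<^sup>2) \<le> 2 * (x n)\<^sup>2 + 2 * (y n)\<^sup>2"
      unfolding real_norm_def abs_power2 by (simp add: power2_eq_square algebra_simps)
  qed
qed

lemma l2_prod_summable:
  fixes x y :: "nat \<Rightarrow> real"
  assumes "summable (\<lambda>n. (x n)\<^sup>2)" "summable (\<lambda>n. (y n)\<^sup>2)"
  shows "summable (\<lambda>n. x n * y n)"
proof (rule summable_comparison_test[OF _ summable_add[OF assms]])
  show "\<exists>N. \<forall>n\<ge>N. norm (x n * y n) \<le> (x n)\<^sup>2 + (y n)\<^sup>2"
  proof (intro exI allI impI)
    fix n
    have "0 \<le> (\<bar>x n\<bar> - \<bar>y n\<bar>)\<^sup>2" by simp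
    then have a: "2 * (\<bar>x n\<bar> * \<bar>y n\<bar>) \<le> (x n)\<^sup>2 + (y n)\<^sup>2"
      by (simp add: power2_eq_square algebra_simps)
    have b: "0 \<le> \<bar>x n\<bar> * \<bar>y n\<bar>" by simp
    show "norm (x n * y n) \<le> (x n)\<^sup>2 + (y n)\<^sup>2"
      using a b unfolding real_norm_def abs_mult by linarith
  qed
qed

instantiation l2 :: real_vector
begin
lift_definition zero_l2 :: l2 is "\<lambda>_. 0" by simp
lift_definition plus_l2 :: "l2 \<Rightarrow> l2 \<Rightarrow> l2" is "\<lambda>x y n. x n + y n"
  by (auto intro: l2_sq_add)
lift_definition uminus_l2 :: "l2 \<Rightarrow> l2" is "\<lambda>x n. - x n" by simp
lift_definition minus_l2 :: "l2 \<Rightarrow> l2 \<Rightarrow> l2" is "\<lambda>x y n. x n - y n"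
proof -
  fix x y :: "nat \<Rightarrow> real"
  assume "x 0 = 0 \<and> summable (\<lambda>n. (x n)\<^sup>2)" "y 0 = 0 \<and> summable (\<lambda>n. (y n)\<^sup>2)"
  then have "summable (\<lambda>n. (x n + - y n)\<^sup>2)" by (intro l2_sq_add) auto
  then show "x 0 - y 0 = 0 \<and> summable (\<lambda>n. (x n - y n)\<^sup>2)"
    using \<open>x 0 = 0 \<and> _\<close> \<open>y 0 = 0 \<and> _\<close> by simp
qed
lift_definition scaleR_l2 :: "real \<Rightarrow> l2 \<Rightarrow> l2" is "\<lambda>c x n. c * x n"
  by (simp add: power_mult_distrib summable_mult)
instance
  by standard (transfer; auto simp: algebra_simps)+
end

instantiation l2 :: real_inner
begin
lift_definition inner_l2 :: "l2 \<Rightarrow> l2 \<Rightarrow> real" is "\<lambda>x y. \<Sum>n. x n * y n" .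
definition norm_l2 :: "l2 \<Rightarrow> real" where "norm_l2 x = sqrt (inner x x)"
definition sgn_l2 :: "l2 \<Rightarrow> l2" where "sgn_l2 x = x /\<^sub>R norm x"
definition dist_l2 :: "l2 \<Rightarrow> l2 \<Rightarrow> real" where "dist_l2 x y = norm (x - y)"
definition uniformity_l2 :: "(l2 \<times> l2) filter"
  where "uniformity_l2 = (INF e\<in>{0<..}. principal {(x, y). dist x y < e})"
definition open_l2 :: "l2 set \<Rightarrow> bool"
  where "open_l2 U = (\<forall>x\<in>U. \<forall>\<^sub>F (x', y) in uniformity. x' = x \<longrightarrow> y \<in> U)"
instance
proof
  fix x y z :: l2 and r :: real
  show "inner x y = inner y x" by transfer (simp add: mult.commute)
  show "inner (x + y) z = inner x z + inner y z"
    by transfer (auto simp: distrib_right intro!: suminf_add[symmetric] l2_prod_summable)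
  show "inner (r *\<^sub>R x) y = r * inner x y"
    by transfer (auto simp: mult.assoc intro!: suminf_mult l2_prod_summable)
  show "0 \<le> inner x x"
    by transfer (auto intro!: suminf_nonneg simp: power2_eq_square)
  show "(inner x x = 0) = (x = 0)"
    by transfer (auto simp: power2_eq_square[symmetric] suminf_eq_zero_iff)
qed (auto simp: norm_l2_def sgn_l2_def dist_l2_def uniformity_l2_def open_l2_def)
end

lift_definition coord :: "l2 \<Rightarrow> nat \<Rightarrow> real" is "\<lambda>x. x" .

lift_definition unit_vec :: "nat \<Rightarrow> l2" is "\<lambda>k n. if k \<noteq> 0 \<and> n = k then 1 else 0"
proof -
  fix k :: nat
  have "summable (\<lambda>n. (if k \<noteq> 0 \<and> n = k then 1 else 0 :: real)\<^sup>2)"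
    by (rule summable_finite[of "{k}"]) auto
  then show "(if k \<noteq> 0 \<and> 0 = k then 1 else 0 :: real) = 0 \<and> summable (\<lambda>n. (if k \<noteq> 0 \<and> n = k then 1 else 0 :: real)\<^sup>2)"
    by auto
qed

definition proper_fun :: "('a \<Rightarrow> ereal) \<Rightarrow> bool" where
  "proper_fun f \<longleftrightarrow> (\<forall>x. f x \<noteq> -\<infinity>) \<and> (\<exists>x. f x \<noteq> \<infinity>)"

definition lsc :: "('a::topological_space \<Rightarrow> ereal) \<Rightarrow> bool" where
  "lsc f \<longleftrightarrow> (\<forall>x. f x \<le> Liminf (at x) f)"

definition global_minimizer :: "('a \<Rightarrow> ereal) \<Rightarrow> 'a \<Rightarrow> bool" where
  "global_minimizer f xb \<longleftrightarrow> (\<forall>x. f xb \<le> f x)"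

definition prox_subdiff :: "('a::real_inner \<Rightarrow> ereal) \<Rightarrow> 'a \<Rightarrow> 'a set" where
  "prox_subdiff f x = {\<zeta>. \<bar>f x\<bar> \<noteq> \<infinity> \<and> (\<exists>\<sigma>>0. \<exists>\<delta>>0. \<forall>y. norm (y - x) < \<delta> \<longrightarrow>
      f y \<ge> f x + ereal (inner \<zeta> (y - x) - \<sigma> / 2 * (norm (y - x))\<^sup>2))}"

definition second_subderiv :: "('a::real_inner \<Rightarrow> ereal) \<Rightarrow> 'a \<Rightarrow> 'a \<Rightarrow> 'a \<Rightarrow> ereal" where
  "second_subderiv f xb p h = Liminf (nhds h \<times>\<^sub>F at_right 0)
     (\<lambda>(h', t). (f (xb + t *\<^sub>R h') - f xb - ereal (t * inner p h')) / ereal (t\<^sup>2 / 2))"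

definition strict_local_min_order2 :: "('a::real_normed_vector \<Rightarrow> ereal) \<Rightarrow> 'a \<Rightarrow> bool" where
  "strict_local_min_order2 f xb \<longleftrightarrow> (\<exists>\<beta>>0. \<exists>\<delta>>0. \<forall>x\<in>ball xb \<delta>.
      f x \<ge> f xb + ereal (\<beta> / 2 * (norm (x - xb))\<^sup>2))"

definition f_ex :: "l2 \<Rightarrow> ereal" where
  "f_ex x = (if \<exists>k\<ge>1. x = (1 / real k) *\<^sub>R unit_vec k
             then ereal (1 / real (THE k. k \<ge> 1 \<and> x = (1 / real k) *\<^sub>R unit_vec k) ^ 3)
             else if x = 0 then 0 else \<infinity>)"

end

theory Submission
  imports Defs
begin

lemma coord_eq_iff: "x = y \<longleftrightarrow> (\<forall>n. coord x n = coord y n)"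
  by transfer auto
lemma coord_scaleR[simp]: "coord (a *\<^sub>R x) n = a * coord x n" by transfer simp
lemma coord_minus[simp]: "coord (x - y) n = coord x n - coord y n" by transfer simp
lemma coord_zero[simp]: "coord 0 n = 0" by transfer simp
lemma coord_unit_vec[simp]: "coord (unit_vec k) n = (if k \<noteq> 0 \<and> n = k then 1 else 0)"
  by transfer simp

lemma inner_unit_vec: "k \<ge> 1 \<Longrightarrow> inner x (unit_vec k) = coord x k"
proof transfer
  fix k :: nat and x :: "nat \<Rightarrow> real"
  assume "1 \<le> k"
  have "(\<lambda>n. if n = k then x n else 0) sums x k" by (rule sums_single)
  moreover have "(\<lambda>n. x n * (if k \<noteq> 0 \<and> n = k then 1 else 0)) = (\<lambda>n. if n = k then x n else 0)"
    using \<open>1 \<le> k\<close> by auto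
  ultimately show "(\<Sum>n. x n * (if k \<noteq> 0 \<and> n = k then 1 else 0)) = x k"
    by (simp add: sums_iff)
qed

lemma norm_unit_vec: "k \<ge> 1 \<Longrightarrow> norm (unit_vec k) = 1"
  by (simp add: norm_l2_def inner_unit_vec)

lemma coord_abs_le: "k \<ge> 1 \<Longrightarrow> \<bar>coord x k\<bar> \<le> norm x"
  using Cauchy_Schwarz_ineq2[of x "unit_vec k"] by (simp add: inner_unit_vec norm_unit_vec)

lemma coord_tends: "\<exists>N. \<forall>k\<ge>N. (coord h k)\<^sup>2 < e" if "e > 0"
proof -
  have "summable (\<lambda>n. (coord h n)\<^sup>2)" by transfer simp
  hence "(\<lambda>n. (coord h n)\<^sup>2) \<longlonglongrightarrow> 0" by (rule summable_LIMSEQ_zero)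
  from order_tendstoD(2)[OF this that] show ?thesis
    by (auto simp: eventually_sequentially)
qed

definition p :: "nat \<Rightarrow> l2" where "p k = (1 / real k) *\<^sub>R unit_vec k"

lemma coord_p: "coord (p k) n = (if k \<noteq> 0 \<and> n = k then 1 / real k else 0)"
  by (simp add: p_def)

lemma norm_p: "k \<ge> 1 \<Longrightarrow> norm (p k) = 1 / real k"
  by (simp add: p_def norm_unit_vec)

lemma p_inj: "j \<ge> 1 \<Longrightarrow> k \<ge> 1 \<Longrightarrow> p j = p k \<Longrightarrow> j = k"
proof (rule ccontr)
  assume "1 \<le> j" "1 \<le> k" "p j = p k" "j \<noteq> k"
  then have "coord (p j) k = coord (p k) k" by simp
  with \<open>j \<noteq> k\<close> \<open>1 \<le> k\<close> show False by (simp add: coord_p)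
qed

lemma p_nz: "k \<ge> 1 \<Longrightarrow> p k \<noteq> 0"
  using norm_p[of k] by auto

lemma f_ex_p: "k \<ge> 1 \<Longrightarrow> f_ex (p k) = ereal (1 / real k ^ 3)"
proof -
  assume k: "k \<ge> 1"
  have "(THE j. j \<ge> 1 \<and> p k = (1 / real j) *\<^sub>R unit_vec j) = k"
    using k p_inj unfolding p_def[symmetric] by (intro the_equality) (auto simp: p_def)
  then show ?thesis using k unfolding f_ex_def p_def by auto
qed

lemma f_ex_0: "f_ex 0 = 0"
  using p_nz unfolding f_ex_def p_def[symmetric] by (auto simp: zero_ereal_def)

lemma f_ex_other: "x \<noteq> 0 \<Longrightarrow> (\<forall>k\<ge>1. x \<noteq> p k) \<Longrightarrow> f_ex x = \<infinity>"
  unfolding f_ex_def p_def by auto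

lemma f_ex_nonneg: "f_ex x \<ge> 0"
  unfolding f_ex_def by auto

definition S :: "l2 set" where "S = insert 0 (p ` {1..})"

lemma f_ex_notS: "x \<notin> S \<Longrightarrow> f_ex x = \<infinity>"
  by (rule f_ex_other) (auto simp: S_def)

lemma closed_S: "closed S"
proof -
  have "(\<lambda>n. p (Suc n)) \<longlonglongrightarrow> 0"
  proof (rule tendsto_norm_zero_cancel)
    have "(\<lambda>n. norm (p (Suc n))) = (\<lambda>n. inverse (real (Suc n)))"
      by (rule ext, subst norm_p) (auto simp: divide_inverse)
    then show "(\<lambda>n. norm (p (Suc n))) \<longlonglongrightarrow> 0"
      using LIMSEQ_inverse_real_of_nat by simp
  qed
  hence "closed (insert 0 (range (\<lambda>n. p (Suc n))))"
    by (simp add: closed_limpt islimpt_insert sequence_unique_limpt)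
  moreover have "insert 0 (range (\<lambda>n. p (Suc n))) = S"
    unfolding S_def
  proof -
    have "range (\<lambda>n. p (Suc n)) = p ` {1..}"
    proof (intro equalityI subsetI)
      fix y assume "y \<in> p ` {1..}"
      then obtain k where "1 \<le> k" "y = p k" by auto
      then have "y = p (Suc (k - 1))" by simp
      then show "y \<in> range (\<lambda>n. p (Suc n))" by blast
    qed auto
    then show "insert 0 (range (\<lambda>n. p (Suc n))) = insert 0 (p ` {1..})" by simp
  qed
  ultimately show ?thesis by simp
qed

lemma ev_inf: "x \<noteq> 0 \<Longrightarrow> eventually (\<lambda>y. y \<notin> S) (at x)"
proof (cases "x \<in> S")
  case False
  assume "x \<noteq> 0"
  have "open (- S)" using closed_S by auto
  then obtain e where "e > 0" "ball x e \<subseteq> - S" using False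
    by (meson ComplI open_contains_ball)
  then show ?thesis unfolding eventually_at
    by (intro exI[of _ e]) (metis ComplD dist_commute mem_ball subsetD)
next
  case True
  assume "x \<noteq> 0"
  then obtain k where k: "k \<ge> 1" "x = p k" using True by (auto simp: S_def)
  show ?thesis unfolding eventually_at
  proof (intro exI[of _ "1 / real k"] conjI ballI impI)
    show "0 < 1 / real k" using k by simp
    fix y assume "y \<in> UNIV" and y: "y \<noteq> x \<and> dist y x < 1 / real k"
    show "y \<notin> S"
    proof
      assume "y \<in> S"
      then have "coord y k = 0" using y k by (auto simp: S_def coord_p)
      then have "\<bar>coord (y - x) k\<bar> = 1 / real k" using k by (simp add: coord_p)
      moreover have "\<bar>coord (y - x) k\<bar> \<le> norm (y - x)" by (rule coord_abs_le[OF k(1)])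
      ultimately show False using y by (simp add: dist_norm)
    qed
  qed
qed

lemma lsc_f: "lsc f_ex"
  unfolding lsc_def
proof
  fix x
  show "f_ex x \<le> Liminf (at x) f_ex"
  proof (cases "x = 0")
    case True
    have "0 \<le> Liminf (at x) f_ex"
      unfolding le_Liminf_iff using f_ex_nonneg
      by (metis always_eventually less_le_trans)
    then show ?thesis using True f_ex_0 by simp
  next
    case False
    have "\<infinity> \<le> Liminf (at x) f_ex"
      unfolding le_Liminf_iff
    proof (intro allI impI)
      fix y :: ereal assume "y < \<infinity>"
      show "\<forall>\<^sub>F z in at x. y < f_ex z"
        by (rule eventually_mono[OF ev_inf[OF False]]) (use \<open>y < \<infinity>\<close> in \<open>simp add: f_ex_notS\<close>)
    qed
    then show ?thesis by simp
  qed
qed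


lemma ev_sub:
  assumes h: "norm h = 1"
  shows "\<forall>\<^sub>F z in nhds h \<times>\<^sub>F at_right 0. snd z > 0 \<and> snd z *\<^sub>R fst z \<notin> S"
proof -
  obtain N where N: "\<forall>k\<ge>N. (coord h k)\<^sup>2 < 1/4" using coord_tends[of "1/4" h] by auto
  have e1: "\<forall>\<^sub>F h' in nhds h. dist h' h < 1/4" unfolding eventually_nhds_metric by (intro exI[of _ "1/4"]) auto
  have e2: "\<forall>\<^sub>F t in at_right (0::real). t \<in> {0<..<1 / (2 * (real N + 1))}"
    by (rule eventually_at_right_real) simp
  have key: "\<forall>h' t. dist h' h < 1/4 \<longrightarrow> t \<in> {0<..<1 / (2 * (real N + 1))} \<longrightarrow> t > 0 \<and> t *\<^sub>R h' \<notin> S"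
  proof (intro allI impI)
    fix h' :: l2 and t :: real
    assume d: "dist h' h < 1/4" and t: "t \<in> {0<..<1 / (2 * (real N + 1))}"
    have t0: "t > 0" and t1: "t < 1 / (2 * (real N + 1))" using t by auto
    have nh1: "norm h' > 3/4" and nh2: "norm h' < 5/4"
      using d h norm_triangle_ineq2[of h' h] norm_triangle_ineq3[of h' h] by (auto simp: dist_norm)
    have nS: "t *\<^sub>R h' \<notin> S"
    proof
      assume "t *\<^sub>R h' \<in> S"
      then consider "t *\<^sub>R h' = 0" | k where "k \<ge> 1" "t *\<^sub>R h' = p k" by (auto simp: S_def)
      then show False
      proof cases
        case 1 then show False using t0 nh1 by auto
      next
        case 2
        then have hk: "h' = (1 / (t * real k)) *\<^sub>R unit_vec k"
        proof -
          have "h' = (1/t) *\<^sub>R (t *\<^sub>R h')" using t0 by simp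
          also have "\<dots> = (1 / (t * real k)) *\<^sub>R unit_vec k" using 2 by (simp add: p_def)
          finally show ?thesis .
        qed
        have kpos: "real k > 0" using 2 by simp
        have nh: "norm h' = 1 / (t * real k)" using hk 2 t0 kpos by (simp add: norm_unit_vec)
        have ch: "coord h' k = 1 / (t * real k)" using hk 2 by simp
        have "\<bar>coord (h' - h) k\<bar> \<le> norm (h' - h)" by (rule coord_abs_le[OF 2(1)])
        then have "\<bar>coord h' k - coord h k\<bar> < 1/4" using d by (simp add: dist_norm)
        then have "coord h k > 1/2" using ch nh nh1 by linarith
        then have "(coord h k)\<^sup>2 > 1/4"
        proof -
          have "1/2 * (1/2) < coord h k * coord h k"
            by (rule mult_strict_mono) (use \<open>coord h k > 1/2\<close> in auto)
          then show ?thesis by (simp add: power2_eq_square)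
        qed
        then have kN: "k < N" using N by (meson not_less order_less_asym)
        have "1 / (t * real k) < 5/4" using nh nh2 by simp
        then have "4 < 5 * (t * real k)" using t0 kpos by (simp add: field_simps)
        moreover have "t * real k < 1 / (2 * (real N + 1)) * real N"
        proof -
          have "t * real k \<le> t * real N" using kN t0 by simp
          also have "\<dots> < 1 / (2 * (real N + 1)) * real N"
          proof (cases "N = 0")
            case True then show ?thesis using kN by simp
          next
            case False then show ?thesis using mult_strict_right_mono[OF t1, of "real N"] by simp
          qed
          finally show ?thesis .
        qed
        moreover have "1 / (2 * (real N + 1)) * real N \<le> 1/2" by (simp add: field_simps)
        ultimately show False by linarith
      qed
    qed
    then show "t > 0 \<and> t *\<^sub>R h' \<notin> S" using t0 by simp
  qed
  show ?thesis unfolding eventually_prod_filter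
    apply (rule exI[of _ "\<lambda>h'. dist h' h < 1/4"], rule exI[of _ "\<lambda>t. t \<in> {0<..<1 / (2 * (real N + 1))}"])
    using e1 e2 key by auto
qed

lemma second_f: "norm h = 1 \<Longrightarrow> second_subderiv f_ex 0 0 h = \<infinity>"
proof -
  assume h: "norm h = 1"
  have "\<infinity> \<le> second_subderiv f_ex 0 0 h"
    unfolding second_subderiv_def le_Liminf_iff
  proof (intro allI impI)
    fix y :: ereal assume y: "y < \<infinity>"
    show "\<forall>\<^sub>F z in nhds h \<times>\<^sub>F at_right 0. y < (case z of (h', t) \<Rightarrow>
        (f_ex (0 + t *\<^sub>R h') - f_ex 0 - ereal (t * inner 0 h')) / ereal (t\<^sup>2 / 2))"
    proof (rule eventually_mono[OF ev_sub[OF h]])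
      fix z :: "l2 \<times> real"
      assume z: "snd z > 0 \<and> snd z *\<^sub>R fst z \<notin> S"
      obtain h' t where zz: "z = (h', t)" by force
      have "f_ex (t *\<^sub>R h') = \<infinity>" using z zz f_ex_notS by simp
      moreover have "t\<^sup>2 / 2 > 0" using z zz by simp
      ultimately show "y < (case z of (h', t) \<Rightarrow>
        (f_ex (0 + t *\<^sub>R h') - f_ex 0 - ereal (t * inner 0 h')) / ereal (t\<^sup>2 / 2))"
        using y zz f_ex_0 by simp
    qed
  qed
  then show ?thesis by (simp add: top_unique)
qed

lemma not_strict: "\<not> strict_local_min_order2 f_ex 0"
  unfolding strict_local_min_order2_def
proof
  assume "\<exists>\<beta>>0. \<exists>\<delta>>0. \<forall>x\<in>ball 0 \<delta>. f_ex 0 + ereal (\<beta> / 2 * (norm (x - 0))\<^sup>2) \<le> f_ex x"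
  then obtain \<beta> \<delta> where b: "\<beta> > 0" "\<delta> > 0"
    and H: "\<forall>x\<in>ball 0 \<delta>. f_ex 0 + ereal (\<beta> / 2 * (norm (x - 0))\<^sup>2) \<le> f_ex x" by auto
  obtain k :: nat where k: "real k > 1/\<delta> + 2/\<beta> + 1"
    using reals_Archimedean2 by blast
  have bd: "0 < 1/\<delta>" "0 < 2/\<beta>" using b by auto
  have k1: "k \<ge> 1" using k bd by linarith
  have kp: "real k > 0" using k1 by simp
  have "1 / real k < \<delta>"
  proof -
    have "1/\<delta> < real k" using k bd by linarith
    then show ?thesis using b kp by (simp add: field_simps)
  qed
  then have "p k \<in> ball 0 \<delta>" using norm_p[OF k1] by simp
  from H[rule_format, OF this] have "\<beta> / 2 * (1 / real k)\<^sup>2 \<le> 1 / real k ^ 3"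
    using f_ex_p[OF k1] norm_p[OF k1] f_ex_0 by simp
  then have "\<beta> / 2 * real k \<le> 1" using kp by (simp add: field_simps power2_eq_square power3_eq_cube)
  moreover have "2/\<beta> < real k" using k bd by linarith
  then have "1 < \<beta> / 2 * real k" using b by (simp add: field_simps)
  ultimately show False by simp
qed

theorem mainTheorem13:
  shows "proper_fun f_ex \<and> lsc f_ex \<and> global_minimizer f_ex 0 \<and> 0 \<in> prox_subdiff f_ex 0
    \<and> (\<forall>h. norm h = 1 \<longrightarrow> second_subderiv f_ex 0 0 h = \<infinity>)
    \<and> \<not> strict_local_min_order2 f_ex 0"
proof (intro conjI allI impI)
  show "proper_fun f_ex" unfolding proper_fun_def
  proof
    show "\<forall>x. f_ex x \<noteq> - \<infinity>"
    proof
      fix x show "f_ex x \<noteq> - \<infinity>" using f_ex_nonneg[of x] by auto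
    qed
    show "\<exists>x. f_ex x \<noteq> \<infinity>" using f_ex_0 by (intro exI[of _ 0]) simp
  qed
  show "lsc f_ex" by (rule lsc_f)
  show "global_minimizer f_ex 0" unfolding global_minimizer_def using f_ex_0 f_ex_nonneg by simp
  have key: "\<forall>y. norm (y - 0) < 1 \<longrightarrow>
      f_ex 0 + ereal (inner 0 (y - 0) - 1 / 2 * (norm (y - 0))\<^sup>2) \<le> f_ex y"
  proof (intro allI impI)
    fix y :: l2
    have "f_ex 0 + ereal (inner 0 (y - 0) - 1 / 2 * (norm (y - 0))\<^sup>2) = ereal (- ((norm y)\<^sup>2 / 2))"
      by (simp add: f_ex_0)
    also have "\<dots> \<le> 0" by simp
    also have "\<dots> \<le> f_ex y" by (rule f_ex_nonneg)
    finally show "f_ex 0 + ereal (inner 0 (y - 0) - 1 / 2 * (norm (y - 0))\<^sup>2) \<le> f_ex y" .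
  qed
  show "0 \<in> prox_subdiff f_ex 0" unfolding prox_subdiff_def
    apply (rule CollectI, rule conjI)
     apply (simp add: f_ex_0)
    apply (rule exI[of _ "1::real"], rule conjI, simp)
    apply (rule exI[of _ "1::real"], rule conjI, simp)
    by (rule key)
  show "second_subderiv f_ex 0 0 h = \<infinity>" if "norm h = 1" for h using second_f that by simp
  show "\<not> strict_local_min_order2 f_ex 0" by (rule not_strict)
qed

end
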